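(* Let $X$ be a topological space, $I$ a set, and $(\phi_i)_{i\in I}$, $(\psi_i)_{i\in I}$ uniformly bounded families of lower semicontinuous functions $X\to\mathbb{R}$. For $f\in X$ and $m\in\mathbb{N}$, $m\ge1$, define $\phi(f)=\sup_{i\in I}\phi_i(f)$, $\theta_m(f)=\sup_{i\in I}\big[\phi_i(f)+2^{-m}\psi_i(f)\big]$ and $\theta(f)=\sum_{m=1}^\infty2^{-m}\theta_m(f)$. If $(f_n)$ is a sequence converging to $f$ in $X$ with $\theta(f_n)\to\theta(f)$, then there is a sequence $(i_n)$ in $I$ such that $\phi_{i_n}(f)\to\phi(f)$, $\phi_{i_n}(f_n)\to\phi(f)$, $\phi(f_n)\to\phi(f)$, and $\psi_{i_n}(f_n)-\psi_{i_n}(f)\to0$ as $n\to\infty$. Moreover, if $I$ is equipped with a topology in which it is sequentially compact, then $(i_n)$ may be chosen to be convergent in that topology. *)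

theory Defs
  imports "HOL-Analysis.Analysis"
begin

definition lsc :: "('a::topological_space \<Rightarrow> real) \<Rightarrow> bool" where
  "lsc g \<longleftrightarrow> (\<forall>a. open {x. a < g x})"

definition seq_compact_space :: "'i topology \<Rightarrow> bool" where
  "seq_compact_space T \<longleftrightarrow>
     (\<forall>s. (\<forall>n. s n \<in> topspace T) \<longrightarrow>
        (\<exists>l (r::nat\<Rightarrow>nat). l \<in> topspace T \<and> strict_mono r \<and> limitin T (s \<circ> r) l sequentially))"

definition sup_fam :: "'i set \<Rightarrow> ('i \<Rightarrow> 'a \<Rightarrow> real) \<Rightarrow> 'a \<Rightarrow> real" where
  "sup_fam I \<phi> x = (SUP i\<in>I. \<phi> i x)"

definition theta_m :: "'i set \<Rightarrow> ('i \<Rightarrow> 'a \<Rightarrow> real) \<Rightarrow> ('i \<Rightarrow> 'a \<Rightarrow> real) \<Rightarrow> nat \<Rightarrow> 'a \<Rightarrow> real" where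
  "theta_m I \<phi> \<psi> m x = (SUP i\<in>I. \<phi> i x + (1/2)^m * \<psi> i x)"

definition theta :: "'i set \<Rightarrow> ('i \<Rightarrow> 'a \<Rightarrow> real) \<Rightarrow> ('i \<Rightarrow> 'a \<Rightarrow> real) \<Rightarrow> 'a \<Rightarrow> real" where
  "theta I \<phi> \<psi> x = (\<Sum>m. (1/2)^(Suc m) * theta_m I \<phi> \<psi> (Suc m) x)"

end

theory Submission
  imports Defs
begin

lemma lsc_ev:
  assumes "lsc g" "fs \<longlonglongrightarrow> f" "a < g f"
  shows "eventually (\<lambda>n. a < g (fs n)) sequentially"
  using topological_tendstoD[OF assms(2), of "{x. a < g x}"] assms(1,3) unfolding lsc_def by auto

lemma diag:
  fixes R :: "nat \<Rightarrow> nat \<Rightarrow> bool"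
  assumes ev: "\<And>k. eventually (R k) sequentially"
  shows "\<exists>kk. filterlim kk at_top sequentially \<and> eventually (\<lambda>n. R (kk n) n) sequentially"
proof -
  have "\<forall>k. \<exists>N. \<forall>n\<ge>N. R k n" using ev unfolding eventually_sequentially by blast
  then obtain N where N: "\<And>k n. n \<ge> N k \<Longrightarrow> R k n" by metis
  define Nm where "Nm k = (\<Sum>k'\<le>k. N k') + k" for k
  have NmN: "N k \<le> Nm k" for k
    unfolding Nm_def using member_le_sum[of k "{..k}" N] by auto
  have Nmk: "k \<le> Nm k" for k unfolding Nm_def by auto
  have Nmmono: "Nm a \<le> Nm b" if "a \<le> b" for a b
    unfolding Nm_def using sum_mono2[of "{..b}" "{..a}" N] that by auto
  define kk where "kk n = (GREATEST k. Nm k \<le> n)" for n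
  have kkP: "Nm (kk n) \<le> n" if "n \<ge> Nm 0" for n
    unfolding kk_def by (rule GreatestI_nat[of _ 0 n]) (use that Nmk order_trans in auto)
  have kkge: "K \<le> kk n" if "n \<ge> Nm K" for n K
    unfolding kk_def by (rule Greatest_le_nat[of _ K n]) (use that Nmk order_trans in auto)
  have "filterlim kk at_top sequentially"
    unfolding filterlim_at_top eventually_sequentially using kkge by blast
  moreover have "eventually (\<lambda>n. R (kk n) n) sequentially"
    unfolding eventually_sequentially
    by (rule exI[of _ "Nm 0"]) (auto intro!: N intro: order_trans[OF NmN kkP])
  ultimately show ?thesis by blast
qed

lemma series_upper:
  fixes d :: "nat \<Rightarrow> nat \<Rightarrow> real"
  assumes bd: "\<And>k n. \<bar>d k n\<bar> \<le> C"
    and S: "(\<lambda>n. \<Sum>k. (1/2)^Suc k * d k n) \<longlonglongrightarrow> 0"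
    and low: "\<And>k \<eta>. \<eta> > 0 \<Longrightarrow> eventually (\<lambda>n. d k n > -\<eta>) sequentially"
    and dpos: "\<delta> > 0"
  shows "eventually (\<lambda>n. d m n < \<delta>) sequentially"
proof -
  have C0: "C \<ge> 0" using bd[of 0 0] by linarith
  define c where "c = ((1::real)/2)^Suc m"
  have c0: "c > 0" unfolding c_def by simp
  have "\<exists>M. C * (1/2)^M < c * \<delta> / 4"
  proof -
    have "(\<lambda>M. C * ((1::real)/2)^M) \<longlonglongrightarrow> C * 0"
      by (intro tendsto_mult tendsto_const LIMSEQ_power_zero) auto
    then have "eventually (\<lambda>M. C * ((1::real)/2)^M < c * \<delta> / 4) sequentially"
      using c0 dpos by (intro order_tendstoD) auto
    then show ?thesis by (auto simp: eventually_sequentially)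
  qed
  then obtain M0 where M0: "C * (1/2)^M0 < c * \<delta> / 4" by blast
  define M where "M = max M0 (Suc m)"
  have "C * (1/2)^M \<le> C * (1/2)^M0"
    using C0 by (intro mult_left_mono power_decreasing) (auto simp: M_def)
  with M0 have M: "C * (1/2)^M < c * \<delta> / 4" by linarith
  have mM: "m < M" unfolding M_def by auto
  define \<eta> where "\<eta> = c * \<delta> / (4 * (real M + 1))"
  have eta0: "\<eta> > 0" unfolding \<eta>_def using c0 dpos by auto
  have etaM1: "\<eta> * (real M + 1) = c * \<delta> / 4"
    unfolding \<eta>_def by (simp add: divide_simps del: of_nat_Suc)
  have etaM: "\<eta> + real M * \<eta> = c * \<delta> / 4"
    using etaM1 by (simp add: algebra_simps)
  have ev1: "eventually (\<lambda>n. (\<Sum>k. (1/2)^Suc k * d k n) < \<eta>) sequentially"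
    using S eta0 by (intro order_tendstoD) auto
  have ev2: "eventually (\<lambda>n. \<forall>k\<in>{..<M}. d k n > -\<eta>) sequentially"
    using low eta0 by (intro eventually_ball_finite) auto
  show ?thesis
    using ev1 ev2
  proof eventually_elim
    case (elim n)
    let ?g = "\<lambda>k. ((1::real)/2)^Suc k * d k n"
    have sg: "summable ?g"
    proof (rule summable_comparison_test'[of "\<lambda>k. C * (1/2)^Suc k" 0])
      show "summable (\<lambda>k. C * ((1::real)/2)^Suc k)"
        by (intro summable_mult) (simp add: summable_geometric_iff)
      fix k :: nat
      show "norm (?g k) \<le> C * (1/2)^Suc k"
        using bd[of k n] by (simp add: abs_mult mult.commute)
    qed
    have split: "suminf ?g = (\<Sum>i. ?g (i + M)) + sum ?g {..<M}"
      by (rule suminf_split_initial_segment[OF sg])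
    have geo: "(\<lambda>i. ((1::real)/2)^Suc M * (1/2)^i) sums (((1::real)/2)^Suc M * 2)"
    proof -
      have "(\<lambda>i. ((1::real)/2)^i) sums 2" using geometric_sums[of "(1::real)/2"] by simp
      from sums_mult[OF this] show ?thesis .
    qed
    have sumtail: "summable (\<lambda>i. - C * ((1::real)/2)^Suc (i+M))"
      using summable_mult[OF sums_summable[OF geo], of "-C"]
      by (simp add: power_add mult_ac)
    have tailv: "(\<Sum>i. - C * ((1::real)/2)^Suc (i+M)) = - C * (1/2)^M"
    proof -
      have "(\<lambda>i. - C * ((1::real)/2)^Suc (i+M)) = (\<lambda>i. -C * (((1::real)/2)^Suc M * (1/2)^i))"
        by (simp add: power_add mult_ac)
      moreover have "(\<lambda>i. -C * (((1::real)/2)^Suc M * (1/2)^i)) sums (-C * (((1::real)/2)^Suc M * 2))"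
        by (rule sums_mult[OF geo])
      ultimately show ?thesis by (simp add: sums_iff)
    qed
    have tail: "(\<Sum>i. ?g (i + M)) \<ge> - C * (1/2)^M"
    proof -
      have "(\<Sum>i. - C * ((1::real)/2)^Suc (i+M)) \<le> (\<Sum>i. ?g (i + M))"
      proof (rule suminf_le)
        fix i
        have "- C \<le> d (i+M) n" using bd[of "i+M" n] by linarith
        then show "- C * ((1::real)/2)^Suc (i+M) \<le> ?g (i + M)"
          by (subst mult.commute) (intro mult_left_mono, auto)
      qed (use sumtail summable_ignore_initial_segment[OF sg, of M] in auto)
      with tailv show ?thesis by simp
    qed
    have fin: "sum ?g {..<M} = ?g m + sum ?g ({..<M} - {m})"
      using mM by (subst sum.remove[of _ m]) auto
    have each: "?g k \<ge> - \<eta>" if "k \<in> {..<M} - {m}" for k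
    proof -
      have dk: "d k n > -\<eta>" using elim(2) that by auto
      have ck: "((1::real)/2)^Suc k \<le> 1" "((1::real)/2)^Suc k \<ge> 0"
        by (rule power_le_one, auto)
      have "?g k \<ge> ((1::real)/2)^Suc k * (-\<eta>)"
        using dk ck by (intro mult_left_mono) auto
      moreover have "((1::real)/2)^Suc k * (-\<eta>) \<ge> -\<eta>"
        using ck eta0 by (simp add: mult_le_cancel_right1 mult_left_le_one_le)
      ultimately show ?thesis by linarith
    qed
    have "sum ?g ({..<M} - {m}) \<ge> (\<Sum>k\<in>{..<M} - {m}. - \<eta>)"
      by (rule sum_mono) (use each in auto)
    moreover have "(\<Sum>k\<in>{..<M} - {m}. - \<eta>) \<ge> - real M * \<eta>"
      using eta0 mM by (simp add: card_Diff_singleton)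
    ultimately have rest: "sum ?g ({..<M} - {m}) \<ge> - real M * \<eta>" by linarith
    have "c * d m n < c * \<delta>"
      using elim(1) split fin rest tail M etaM mult_pos_pos[OF c0 dpos] unfolding c_def by linarith
    then show ?case using c0 by simp
  qed
qed

lemma limitin_reindex:
  assumes "limitin T j l sequentially" "filterlim kk at_top sequentially"
  shows "limitin T (\<lambda>n. j (kk n)) l sequentially"
  using assms unfolding limitin_def filterlim_iff by auto

lemma bound_tendsto:
  fixes a b :: "nat \<Rightarrow> real"
  assumes "eventually (\<lambda>n. \<bar>a n - s\<bar> \<le> b n) sequentially" "b \<longlonglongrightarrow> 0"
  shows "a \<longlonglongrightarrow> s"
proof -
  have "(\<lambda>n. a n - s) \<longlonglongrightarrow> 0"
    by (rule Lim_null_comparison[OF _ assms(2)]) (use assms(1) in auto)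
  then show ?thesis by (rule LIM_zero_cancel)
qed

lemma assemble:
  fixes P Q :: "'i \<Rightarrow> 'a \<Rightarrow> real" and e :: "nat \<Rightarrow> real"
  assumes jI: "\<And>k. j k \<in> I" and e0: "e \<longlonglongrightarrow> 0"
    and A: "\<And>k. \<bar>P (j k) f - s\<bar> \<le> e k"
    and R: "\<And>k. eventually (\<lambda>n. \<bar>P (j k) (fs n) - P (j k) f\<bar> \<le> e k
              \<and> \<bar>Q (j k) (fs n) - Q (j k) f\<bar> \<le> e k \<and> sf n \<le> s + e k) sequentially"
    and sfl: "\<And>i n. i \<in> I \<Longrightarrow> P i (fs n) \<le> sf n"
  shows "\<exists>kk. filterlim kk at_top sequentially
     \<and> (\<lambda>n. P (j (kk n)) f) \<longlonglongrightarrow> s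
     \<and> (\<lambda>n. P (j (kk n)) (fs n)) \<longlonglongrightarrow> s
     \<and> sf \<longlonglongrightarrow> s
     \<and> (\<lambda>n. Q (j (kk n)) (fs n) - Q (j (kk n)) f) \<longlonglongrightarrow> 0"
proof -
  obtain kk where kk: "filterlim kk at_top sequentially"
    and ev: "eventually (\<lambda>n. \<bar>P (j (kk n)) (fs n) - P (j (kk n)) f\<bar> \<le> e (kk n)
              \<and> \<bar>Q (j (kk n)) (fs n) - Q (j (kk n)) f\<bar> \<le> e (kk n) \<and> sf n \<le> s + e (kk n)) sequentially"
    using diag[of "\<lambda>k n. \<bar>P (j k) (fs n) - P (j k) f\<bar> \<le> e k
              \<and> \<bar>Q (j k) (fs n) - Q (j k) f\<bar> \<le> e k \<and> sf n \<le> s + e k", OF R] by blast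
  have ek: "(\<lambda>n. e (kk n)) \<longlonglongrightarrow> 0" by (rule filterlim_compose[OF e0 kk])
  have ek2: "(\<lambda>n. 2 * e (kk n)) \<longlonglongrightarrow> 0" using tendsto_mult[OF tendsto_const ek, of 2] by simp
  have 1: "(\<lambda>n. P (j (kk n)) f) \<longlonglongrightarrow> s"
    by (rule bound_tendsto[OF _ ek]) (use A in auto)
  have 2: "(\<lambda>n. P (j (kk n)) (fs n)) \<longlonglongrightarrow> s"
  proof (rule bound_tendsto[OF _ ek2])
    show "eventually (\<lambda>n. \<bar>P (j (kk n)) (fs n) - s\<bar> \<le> 2 * e (kk n)) sequentially"
      using ev
    proof eventually_elim
      case (elim n)
      have "\<bar>P (j (kk n)) f - s\<bar> \<le> e (kk n)" using A by auto
      then show ?case using elim by auto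
    qed
  qed
  have 3: "sf \<longlonglongrightarrow> s"
  proof (rule bound_tendsto[OF _ ek2])
    show "eventually (\<lambda>n. \<bar>sf n - s\<bar> \<le> 2 * e (kk n)) sequentially"
      using ev
    proof eventually_elim
      case (elim n)
      have "P (j (kk n)) (fs n) \<le> sf n" using sfl jI by auto
      moreover have "\<bar>P (j (kk n)) f - s\<bar> \<le> e (kk n)" using A by auto
      ultimately show ?case using elim by auto
    qed
  qed
  have 4: "(\<lambda>n. Q (j (kk n)) (fs n) - Q (j (kk n)) f) \<longlonglongrightarrow> 0"
    by (rule bound_tendsto[OF _ ek]) (use ev in \<open>eventually_elim, auto\<close>)
  show ?thesis using kk 1 2 3 4 by blast
qed


theorem proposition1p2:
  fixes I :: "'i set"
    and \<phi> \<psi> :: "'i \<Rightarrow> 'a::topological_space \<Rightarrow> real"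
    and fs :: "nat \<Rightarrow> 'a" and f :: 'a
  assumes I_ne: "I \<noteq> {}"
    and lsc_phi: "\<forall>i\<in>I. lsc (\<phi> i)"
    and lsc_psi: "\<forall>i\<in>I. lsc (\<psi> i)"
    and bdd_phi: "\<exists>B. \<forall>i\<in>I. \<forall>x. \<bar>\<phi> i x\<bar> \<le> B"
    and bdd_psi: "\<exists>B. \<forall>i\<in>I. \<forall>x. \<bar>\<psi> i x\<bar> \<le> B"
    and conv: "fs \<longlonglongrightarrow> f"
    and theta_conv: "(\<lambda>n. theta I \<phi> \<psi> (fs n)) \<longlonglongrightarrow> theta I \<phi> \<psi> f"
  shows "(\<exists>idx. (\<forall>n. idx n \<in> I)
            \<and> (\<lambda>n. \<phi> (idx n) f) \<longlonglongrightarrow> sup_fam I \<phi> f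
            \<and> (\<lambda>n. \<phi> (idx n) (fs n)) \<longlonglongrightarrow> sup_fam I \<phi> f
            \<and> (\<lambda>n. sup_fam I \<phi> (fs n)) \<longlonglongrightarrow> sup_fam I \<phi> f
            \<and> (\<lambda>n. \<psi> (idx n) (fs n) - \<psi> (idx n) f) \<longlonglongrightarrow> 0)
       \<and> (\<forall>T :: 'i topology. topspace T = I \<and> seq_compact_space T \<longrightarrow>
           (\<exists>idx. (\<forall>n. idx n \<in> I)
            \<and> (\<lambda>n. \<phi> (idx n) f) \<longlonglongrightarrow> sup_fam I \<phi> f
            \<and> (\<lambda>n. \<phi> (idx n) (fs n)) \<longlonglongrightarrow> sup_fam I \<phi> f
            \<and> (\<lambda>n. sup_fam I \<phi> (fs n)) \<longlonglongrightarrow> sup_fam I \<phi> f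
            \<and> (\<lambda>n. \<psi> (idx n) (fs n) - \<psi> (idx n) f) \<longlonglongrightarrow> 0
            \<and> (\<exists>l. limitin T idx l sequentially)))"
proof -
  obtain Bp where Bp: "\<And>i x. i \<in> I \<Longrightarrow> \<bar>\<phi> i x\<bar> \<le> Bp" using bdd_phi by blast
  obtain Bq where Bq: "\<And>i x. i \<in> I \<Longrightarrow> \<bar>\<psi> i x\<bar> \<le> Bq" using bdd_psi by blast
  obtain i0 where i0: "i0 \<in> I" using I_ne by blast
  have Bp0: "Bp \<ge> 0" using Bp[OF i0, of f] by linarith
  have Bq0: "Bq \<ge> 0" using Bq[OF i0, of f] by linarith
  define s where "s = sup_fam I \<phi> f"
  have epsle: "((1::real)/2)^m \<le> 1" for m :: nat by (rule power_le_one) auto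
  have epsge: "((1::real)/2)^m > 0" for m :: nat by simp
  have qb: "\<bar>((1::real)/2)^m * \<psi> i x\<bar> \<le> ((1::real)/2)^m * Bq" if "i \<in> I" for m i x
    using Bq[OF that, of x] epsge[of m] by (simp add: abs_mult)
  have qb1: "((1::real)/2)^m * Bq \<le> Bq" for m
    using epsle[of m] Bq0 by (simp add: mult_left_le_one_le)
  have bddT: "bdd_above ((\<lambda>i. \<phi> i x + (1/2)^m * \<psi> i x) ` I)" for m x
  proof (rule bdd_aboveI2)
    fix i assume "i \<in> I"
    then show "\<phi> i x + (1/2)^m * \<psi> i x \<le> Bp + Bq"
      using Bp[of i x] qb[of i m x] qb1[of m] by auto
  qed
  have bddP: "bdd_above ((\<lambda>i. \<phi> i x) ` I)" for x
  proof (rule bdd_aboveI2)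
    fix i assume "i \<in> I"
    then show "\<phi> i x \<le> Bp" using Bp[of i x] by auto
  qed
  have thU: "\<phi> i x + (1/2)^m * \<psi> i x \<le> theta_m I \<phi> \<psi> m x" if "i \<in> I" for i x m
    unfolding theta_m_def by (rule cSUP_upper[OF that bddT])
  have supU: "\<phi> i x \<le> sup_fam I \<phi> x" if "i \<in> I" for i x
    unfolding sup_fam_def by (rule cSUP_upper[OF that bddP])
  have thUp: "theta_m I \<phi> \<psi> m x \<le> sup_fam I \<phi> x + (1/2)^m * Bq" for m x
    unfolding theta_m_def
  proof (rule cSUP_least[OF I_ne])
    fix i assume i: "i \<in> I"
    show "\<phi> i x + (1/2)^m * \<psi> i x \<le> sup_fam I \<phi> x + (1/2)^m * Bq"
      using supU[OF i, of x] qb[OF i, of m x] by auto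
  qed
  have thLow: "sup_fam I \<phi> x \<le> theta_m I \<phi> \<psi> m x + (1/2)^m * Bq" for m x
    unfolding sup_fam_def
  proof (rule cSUP_least[OF I_ne])
    fix i assume i: "i \<in> I"
    show "\<phi> i x \<le> theta_m I \<phi> \<psi> m x + (1/2)^m * Bq"
      using thU[OF i, of x m] qb[OF i, of m x] by auto
  qed
  have thB: "\<bar>theta_m I \<phi> \<psi> m x\<bar> \<le> Bp + Bq" for m x
  proof -
    have "theta_m I \<phi> \<psi> m x \<le> Bp + Bq"
      unfolding theta_m_def
    proof (rule cSUP_least[OF I_ne])
      fix i assume "i \<in> I"
      then show "\<phi> i x + (1/2)^m * \<psi> i x \<le> Bp + Bq"
        using Bp[of i x] qb[of i m x] qb1[of m] by auto
    qed
    moreover have "- (Bp + Bq) \<le> theta_m I \<phi> \<psi> m x"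
      using thU[OF i0, of x m] Bp[OF i0, of x] qb[OF i0, of m x] qb1[of m] by auto
    ultimately show ?thesis by auto
  qed
  have thlsc: "eventually (\<lambda>n. theta_m I \<phi> \<psi> m f - \<eta> < theta_m I \<phi> \<psi> m (fs n)) sequentially"
    if eta: "\<eta> > 0" for m \<eta>
  proof -
    have "theta_m I \<phi> \<psi> m f - \<eta> < theta_m I \<phi> \<psi> m f" using eta by simp
    then obtain i where i: "i \<in> I" and a: "theta_m I \<phi> \<psi> m f - \<eta> < \<phi> i f + (1/2)^m * \<psi> i f"
      unfolding theta_m_def less_cSUP_iff[OF I_ne bddT] by blast
    define g where "g = \<phi> i f + (1/2)^m * \<psi> i f - (theta_m I \<phi> \<psi> m f - \<eta>)"
    have g0: "g > 0" using a unfolding g_def by simp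
    have e1: "eventually (\<lambda>n. \<phi> i f - g/2 < \<phi> i (fs n)) sequentially"
      by (rule lsc_ev[OF _ conv]) (use lsc_phi i g0 in auto)
    have e2: "eventually (\<lambda>n. \<psi> i f - g/2 < \<psi> i (fs n)) sequentially"
      by (rule lsc_ev[OF _ conv]) (use lsc_psi i g0 in auto)
    show ?thesis using e1 e2
    proof eventually_elim
      case (elim n)
      have "(1/2)^m * (\<psi> i f - g/2) \<le> (1/2)^m * \<psi> i (fs n)"
        using elim(2) epsge[of m] by (intro mult_left_mono) auto
      then have f1: "(1/2)^m * \<psi> i f - (1/2)^m * (g/2) \<le> (1/2)^m * \<psi> i (fs n)"
        by (simp only: right_diff_distrib)
      have f2: "(1/2)^m * (g/2) \<le> g/2" using epsle[of m] g0 by (simp add: mult_left_le_one_le)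
      have f3: "\<phi> i (fs n) + (1/2)^m * \<psi> i (fs n) \<le> theta_m I \<phi> \<psi> m (fs n)" by (rule thU[OF i])
      show ?case using f1 f2 f3 elim(1) g_def by linarith
    qed
  qed

  have summ: "summable (\<lambda>k. (1/2)^Suc k * theta_m I \<phi> \<psi> (Suc k) x)" for x
  proof (rule summable_comparison_test'[of "\<lambda>k. (Bp + Bq) * (1/2)^Suc k" 0])
    show "summable (\<lambda>k. (Bp + Bq) * ((1::real)/2)^Suc k)"
      by (intro summable_mult) (simp add: summable_geometric_iff)
    fix k :: nat
    show "norm ((1/2)^Suc k * theta_m I \<phi> \<psi> (Suc k) x) \<le> (Bp + Bq) * (1/2)^Suc k"
      using thB[of "Suc k" x] by (simp add: abs_mult mult.commute)
  qed
  have Seq: "(\<Sum>k. (1/2)^Suc k * (theta_m I \<phi> \<psi> (Suc k) (fs n) - theta_m I \<phi> \<psi> (Suc k) f))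
        = theta I \<phi> \<psi> (fs n) - theta I \<phi> \<psi> f" for n
    unfolding theta_def right_diff_distrib using suminf_diff[OF summ summ] by simp
  have S: "(\<lambda>n. \<Sum>k. (1/2)^Suc k * (theta_m I \<phi> \<psi> (Suc k) (fs n) - theta_m I \<phi> \<psi> (Suc k) f)) \<longlonglongrightarrow> 0"
    unfolding Seq using LIM_zero[OF theta_conv] .
  have key: "eventually (\<lambda>n. theta_m I \<phi> \<psi> (Suc k) (fs n) - theta_m I \<phi> \<psi> (Suc k) f < \<delta>) sequentially"
    if "\<delta> > 0" for k \<delta>
  proof (rule series_upper[OF _ S _ that])
    fix k n
    show "\<bar>theta_m I \<phi> \<psi> (Suc k) (fs n) - theta_m I \<phi> \<psi> (Suc k) f\<bar> \<le> 2 * (Bp + Bq)"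
      using thB[of "Suc k" "fs n"] thB[of "Suc k" f] unfolding abs_le_iff by auto
  next
    fix k :: nat and \<eta> :: real assume "\<eta> > 0"
    from thlsc[OF this, of "Suc k"]
    show "eventually (\<lambda>n. - \<eta> < theta_m I \<phi> \<psi> (Suc k) (fs n) - theta_m I \<phi> \<psi> (Suc k) f) sequentially"
      by eventually_elim linarith
  qed
  have "\<forall>k. \<exists>i\<in>I. theta_m I \<phi> \<psi> (Suc k) f - ((1/2)^Suc k)^2 < \<phi> i f + (1/2)^Suc k * \<psi> i f"
  proof
    fix k
    have "theta_m I \<phi> \<psi> (Suc k) f - ((1/2)^Suc k)^2 < theta_m I \<phi> \<psi> (Suc k) f" by simp
    then show "\<exists>i\<in>I. theta_m I \<phi> \<psi> (Suc k) f - ((1/2)^Suc k)^2 < \<phi> i f + (1/2)^Suc k * \<psi> i f"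
      unfolding theta_m_def less_cSUP_iff[OF I_ne bddT] .
  qed
  then obtain j where jI: "\<And>k. j k \<in> I"
    and jc: "\<And>k. theta_m I \<phi> \<psi> (Suc k) f - ((1/2)^Suc k)^2 < \<phi> (j k) f + (1/2)^Suc k * \<psi> (j k) f"
    by metis
  define e where "e k = (3 + 2 * Bq) * ((1::real)/2)^Suc k" for k
  have e0: "e \<longlonglongrightarrow> 0"
  proof -
    have "(\<lambda>k. ((1::real)/2)^k) \<longlonglongrightarrow> 0" by (rule LIMSEQ_power_zero) auto
    then have "(\<lambda>k. ((1::real)/2)^Suc k) \<longlonglongrightarrow> 0" by (rule LIMSEQ_Suc)
    then have "(\<lambda>k. (3 + 2 * Bq) * ((1::real)/2)^Suc k) \<longlonglongrightarrow> (3 + 2 * Bq) * 0"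
      by (intro tendsto_mult tendsto_const)
    then show ?thesis unfolding e_def by simp
  qed
  have A: "\<bar>\<phi> (j k) f - s\<bar> \<le> e k" for k
  proof -
    define \<epsilon> where "\<epsilon> = ((1::real)/2)^Suc k"
    have ep: "\<epsilon> > 0" "\<epsilon> \<le> 1" using epsge[of "Suc k"] epsle[of "Suc k"] unfolding \<epsilon>_def by blast+
    have ee: "\<epsilon>^2 \<le> \<epsilon>" using ep by (simp add: power2_eq_square mult_left_le_one_le)
    have u: "\<phi> (j k) f \<le> s" unfolding s_def by (rule supU[OF jI])
    have l1: "s \<le> theta_m I \<phi> \<psi> (Suc k) f + \<epsilon> * Bq" unfolding s_def \<epsilon>_def by (rule thLow)
    have l2: "\<bar>\<epsilon> * \<psi> (j k) f\<bar> \<le> \<epsilon> * Bq" unfolding \<epsilon>_def by (rule qb[OF jI])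
    have l3: "theta_m I \<phi> \<psi> (Suc k) f - \<epsilon>^2 < \<phi> (j k) f + \<epsilon> * \<psi> (j k) f"
      unfolding \<epsilon>_def by (rule jc)
    have "\<epsilon> * Bq \<ge> 0" using ep Bq0 by simp
    have "e k = 3 * \<epsilon> + 2 * (\<epsilon> * Bq)" unfolding e_def \<epsilon>_def by (simp add: algebra_simps)
    then show ?thesis using u l1 l2 l3 ee ep unfolding abs_le_iff by (intro conjI) linarith+
  qed
  have R: "eventually (\<lambda>n. \<bar>\<phi> (j k) (fs n) - \<phi> (j k) f\<bar> \<le> e k
              \<and> \<bar>\<psi> (j k) (fs n) - \<psi> (j k) f\<bar> \<le> e k \<and> sup_fam I \<phi> (fs n) \<le> s + e k) sequentially" for k
  proof -
    define \<epsilon> where "\<epsilon> = ((1::real)/2)^Suc k"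
    have ep: "\<epsilon> > 0" "\<epsilon> \<le> 1" using epsge[of "Suc k"] epsle[of "Suc k"] unfolding \<epsilon>_def by blast+
    have ee: "\<epsilon>^2 \<le> \<epsilon>" using ep by (simp add: power2_eq_square mult_left_le_one_le)
    have ep2: "\<epsilon>^2 > 0" using ep by simp
    have ek: "e k = 3 * \<epsilon> + 2 * (\<epsilon> * Bq)" unfolding e_def \<epsilon>_def by (simp add: algebra_simps)
    have eBq: "\<epsilon> * Bq \<ge> 0" using ep Bq0 by simp
    have l3: "theta_m I \<phi> \<psi> (Suc k) f - \<epsilon>^2 < \<phi> (j k) f + \<epsilon> * \<psi> (j k) f"
      unfolding \<epsilon>_def by (rule jc)
    have l4: "theta_m I \<phi> \<psi> (Suc k) f \<le> s + \<epsilon> * Bq" unfolding s_def \<epsilon>_def by (rule thUp)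
    have e1: "eventually (\<lambda>n. \<phi> (j k) f - \<epsilon>^2 < \<phi> (j k) (fs n)) sequentially"
      by (rule lsc_ev[OF _ conv]) (use lsc_phi jI ep2 in auto)
    have e2: "eventually (\<lambda>n. \<psi> (j k) f - \<epsilon> < \<psi> (j k) (fs n)) sequentially"
      by (rule lsc_ev[OF _ conv]) (use lsc_psi jI ep in auto)
    have e3: "eventually (\<lambda>n. theta_m I \<phi> \<psi> (Suc k) (fs n) - theta_m I \<phi> \<psi> (Suc k) f < \<epsilon>^2) sequentially"
      by (rule key[OF ep2])
    show ?thesis using e1 e2 e3
    proof eventually_elim
      case (elim n)
      have t1: "\<phi> (j k) (fs n) + \<epsilon> * \<psi> (j k) (fs n) \<le> theta_m I \<phi> \<psi> (Suc k) (fs n)"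
        unfolding \<epsilon>_def by (rule thU[OF jI])
      have t2: "sup_fam I \<phi> (fs n) \<le> theta_m I \<phi> \<psi> (Suc k) (fs n) + \<epsilon> * Bq"
        unfolding \<epsilon>_def by (rule thLow)
      have "\<epsilon> * (\<psi> (j k) (fs n) - \<psi> (j k) f) < \<epsilon> * (3 * \<epsilon>)"
        using t1 l3 elim by (simp add: algebra_simps power2_eq_square)
      then have q1: "\<psi> (j k) (fs n) - \<psi> (j k) f < 3 * \<epsilon>" using ep by simp
      have "\<epsilon> * (\<psi> (j k) f - \<psi> (j k) (fs n)) < \<epsilon> * \<epsilon>"
        using elim(2) ep by (intro mult_strict_left_mono) auto
      then have p1: "\<phi> (j k) (fs n) - \<phi> (j k) f < 3 * \<epsilon>^2"
        using t1 l3 elim by (simp add: algebra_simps power2_eq_square)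
      show ?case
      proof (intro conjI)
        show "\<bar>\<phi> (j k) (fs n) - \<phi> (j k) f\<bar> \<le> e k"
          using p1 elim(1) ee ek eBq unfolding abs_le_iff by (intro conjI) linarith+
        show "\<bar>\<psi> (j k) (fs n) - \<psi> (j k) f\<bar> \<le> e k"
          using q1 elim(2) ek eBq unfolding abs_le_iff by (intro conjI) linarith+
        show "sup_fam I \<phi> (fs n) \<le> s + e k"
          using t2 elim(3) l4 ee ek eBq ep by linarith
      qed
    qed
  qed
  have sfl: "\<phi> i (fs n) \<le> sup_fam I \<phi> (fs n)" if "i \<in> I" for i n by (rule supU[OF that])
  have fam: "\<exists>kk. filterlim kk at_top sequentially
     \<and> (\<lambda>n. \<phi> (jj (kk n)) f) \<longlonglongrightarrow> s
     \<and> (\<lambda>n. \<phi> (jj (kk n)) (fs n)) \<longlonglongrightarrow> s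
     \<and> (\<lambda>n. sup_fam I \<phi> (fs n)) \<longlonglongrightarrow> s
     \<and> (\<lambda>n. \<psi> (jj (kk n)) (fs n) - \<psi> (jj (kk n)) f) \<longlonglongrightarrow> 0"
    if "\<And>k. jj k \<in> I" "ee \<longlonglongrightarrow> 0" "\<And>k. \<bar>\<phi> (jj k) f - s\<bar> \<le> ee k"
     "\<And>k. eventually (\<lambda>n. \<bar>\<phi> (jj k) (fs n) - \<phi> (jj k) f\<bar> \<le> ee k
              \<and> \<bar>\<psi> (jj k) (fs n) - \<psi> (jj k) f\<bar> \<le> ee k \<and> sup_fam I \<phi> (fs n) \<le> s + ee k) sequentially"
     for jj ee
    by (rule assemble[where sf = "\<lambda>n. sup_fam I \<phi> (fs n)", OF that(1,2,3,4)]) (rule sfl)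
  have P1: "\<exists>idx. (\<forall>n. idx n \<in> I)
            \<and> (\<lambda>n. \<phi> (idx n) f) \<longlonglongrightarrow> sup_fam I \<phi> f
            \<and> (\<lambda>n. \<phi> (idx n) (fs n)) \<longlonglongrightarrow> sup_fam I \<phi> f
            \<and> (\<lambda>n. sup_fam I \<phi> (fs n)) \<longlonglongrightarrow> sup_fam I \<phi> f
            \<and> (\<lambda>n. \<psi> (idx n) (fs n) - \<psi> (idx n) f) \<longlonglongrightarrow> 0"
  proof -
    obtain kk where "filterlim kk at_top sequentially
     \<and> (\<lambda>n. \<phi> (j (kk n)) f) \<longlonglongrightarrow> s
     \<and> (\<lambda>n. \<phi> (j (kk n)) (fs n)) \<longlonglongrightarrow> s
     \<and> (\<lambda>n. sup_fam I \<phi> (fs n)) \<longlonglongrightarrow> s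
     \<and> (\<lambda>n. \<psi> (j (kk n)) (fs n) - \<psi> (j (kk n)) f) \<longlonglongrightarrow> 0"
      using fam[of j e, OF jI e0 A R] by blast
    then show ?thesis unfolding s_def using jI
      by (intro exI[of _ "\<lambda>n. j (kk n)"]) auto
  qed
  have P2: "\<exists>idx. (\<forall>n. idx n \<in> I)
            \<and> (\<lambda>n. \<phi> (idx n) f) \<longlonglongrightarrow> sup_fam I \<phi> f
            \<and> (\<lambda>n. \<phi> (idx n) (fs n)) \<longlonglongrightarrow> sup_fam I \<phi> f
            \<and> (\<lambda>n. sup_fam I \<phi> (fs n)) \<longlonglongrightarrow> sup_fam I \<phi> f
            \<and> (\<lambda>n. \<psi> (idx n) (fs n) - \<psi> (idx n) f) \<longlonglongrightarrow> 0
            \<and> (\<exists>l. limitin T idx l sequentially)"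
    if T: "topspace T = I" "seq_compact_space T" for T :: "'i topology"
  proof -
    obtain l and r :: "nat \<Rightarrow> nat" where lr: "l \<in> topspace T" "strict_mono r" "limitin T (j \<circ> r) l sequentially"
      using T jI unfolding seq_compact_space_def by blast
    have e0': "(e \<circ> r) \<longlonglongrightarrow> 0" by (rule LIMSEQ_subseq_LIMSEQ[OF e0 lr(2)])
    obtain kk where kk: "filterlim kk at_top sequentially"
     and rest: "(\<lambda>n. \<phi> ((j \<circ> r) (kk n)) f) \<longlonglongrightarrow> s
     \<and> (\<lambda>n. \<phi> ((j \<circ> r) (kk n)) (fs n)) \<longlonglongrightarrow> s
     \<and> (\<lambda>n. sup_fam I \<phi> (fs n)) \<longlonglongrightarrow> s
     \<and> (\<lambda>n. \<psi> ((j \<circ> r) (kk n)) (fs n) - \<psi> ((j \<circ> r) (kk n)) f) \<longlonglongrightarrow> 0"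
      using fam[of "j \<circ> r" "e \<circ> r", OF _ e0'] jI A R by auto
    have "limitin T (\<lambda>n. (j \<circ> r) (kk n)) l sequentially"
      by (rule limitin_reindex[OF lr(3) kk])
    then show ?thesis using rest jI unfolding s_def
      by (intro exI[of _ "\<lambda>n. (j \<circ> r) (kk n)"]) auto
  qed
  show ?thesis using P1 P2 by blast
qed

end
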